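(* For every $n\geq 1$, the number of Grand-Dyck paths of semilength $n$ starting with an up step and avoiding the pattern $DUD$ equals the coefficient of $z^n$ in $\frac{1-3z-\sqrt{1-2z-3z^2}}{6z-2}$, i.e. the $n$-th term of OEIS sequence A005773 ($1,1,2,5,13,35,96,\dots$ indexed from $n=0$).
   Context: A Grand-Dyck path of semilength $n$ starting with an up step is a word with exactly $n$ letters $U$ and $n$ letters $D$ whose first letter is $U$. It avoids the pattern $DUD$ if it has no three consecutive letters equal to $D,U,D$. *)

theory Defs
  imports "HOL-Computational_Algebra.Formal_Power_Series" Complex_Main
begin

datatype step = U | D

definition avoids_DUD :: "step list \<Rightarrow> bool" where
  "avoids_DUD w \<longleftrightarrow>
     \<not> (\<exists>i. i + 2 < length w \<and> w ! i = D \<and> w ! (i + 1) = U \<and> w ! (i + 2) = D)"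

definition grand_dyck_U_DUD :: "nat \<Rightarrow> step list set" where
  "grand_dyck_U_DUD n =
     {w. length (filter (\<lambda>s. s = U) w) = n \<and> length (filter (\<lambda>s. s = D) w) = n
         \<and> w \<noteq> [] \<and> hd w = U \<and> avoids_DUD w}"

definition sqrt_series :: "real fps" where
  "sqrt_series = fps_radical (\<lambda>k x. root k x) 2 (1 - 2 * fps_X - 3 * fps_X ^ 2)"

definition gf_A005773 :: "real fps" where
  "gf_A005773 = (1 - 3 * fps_X - sqrt_series) / (6 * fps_X - 2)"

end

theory Submission
  imports Defs
begin

unbundle fps_syntax


definition PP :: "real fps" where "PP = 1 + fps_X + fps_X ^ 2"

lemma R1: "(PP ^ Suc m) $ (j + 2) = (PP ^ m) $ (j + 2) + (PP ^ m) $ (j + 1) + (PP ^ m) $ j"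
proof -
  have "PP ^ Suc m = PP ^ m + fps_X * PP ^ m + fps_X ^ 2 * PP ^ m"
    by (simp add: PP_def algebra_simps)
  then show ?thesis by (simp add: fps_X_power_mult_nth)
qed

lemma R2fps: "PP * fps_deriv (PP ^ m) = of_nat m * (1 + 2 * fps_X) * PP ^ m"
proof (cases m)
  case 0
  then show ?thesis by simp
next
  case (Suc k)
  have dP: "fps_deriv PP = 1 + 2 * fps_X"
    by (simp add: PP_def fps_deriv_power numeral_2_eq_2)
  show ?thesis unfolding Suc fps_deriv_power' dP by (simp add: algebra_simps)
qed

lemma R2: "real (j + 2) * (PP ^ m) $ (j + 2) + real (j + 1) * (PP ^ m) $ (j + 1) + real j * (PP ^ m) $ j
   = real m * ((PP ^ m) $ (j + 1) + 2 * (PP ^ m) $ j)"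
proof -
  define F where "F = PP ^ m"
  define Dv where "Dv = fps_deriv F"
  have e: "Dv + fps_X * Dv + fps_X ^ 2 * Dv = fps_const (real m) * F + fps_const (2 * real m) * (fps_X * F)"
  proof -
    have "Dv + fps_X * Dv + fps_X ^ 2 * Dv = PP * Dv" by (simp add: PP_def algebra_simps)
    also have "\<dots> = of_nat m * (1 + 2 * fps_X) * F" unfolding Dv_def F_def by (rule R2fps)
    also have "\<dots> = fps_const (real m) * F + fps_const (2 * real m) * (fps_X * F)"
      by (simp add: fps_of_nat algebra_simps numeral_fps_const fps_const_mult[symmetric])
    finally show ?thesis .
  qed
  have "(Dv + fps_X * Dv + fps_X ^ 2 * Dv) $ (j + 1) = (fps_const (real m) * F + fps_const (2 * real m) * (fps_X * F)) $ (j + 1)"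
    using e by simp
  then have "Dv $ (j+1) + (fps_X * Dv) $ (j+1) + (fps_X ^ 2 * Dv) $ (j + 1) = real m * F $ (j + 1) + (2 * real m) * (fps_X * F) $ (j + 1)"
    by (simp only: fps_add_nth fps_mult_left_const_nth)
  then show ?thesis unfolding Dv_def F_def
    by (cases j) (simp_all add: fps_X_power_mult_nth del: fps_X_mult_nth, simp_all add: algebra_simps)
qed

definition ta :: "nat \<Rightarrow> real" where "ta m = (PP ^ m) $ m"
definition tb :: "nat \<Rightarrow> real" where "tb m = (PP ^ m) $ (m + 1)"

lemma ta0: "ta 0 = 1" and tb0: "tb 0 = 0" and ta1: "ta 1 = 1"
  by (simp_all add: ta_def tb_def PP_def)

lemma arec: "ta (k + 1) = ta k + 2 * tb k"
proof (cases k)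
  case 0
  then show ?thesis by (simp add: ta_def tb_def PP_def)
next
  case (Suc l)
  have r1: "ta (l + 2) = tb (l + 1) + ta (l + 1) + (PP ^ (l+1)) $ l"
    using R1[of "l+1" l] by (simp add: ta_def tb_def add.commute)
  have r2: "real (l + 2) * tb (l+1) + real (l + 1) * ta (l+1) + real l * (PP ^ (l+1)) $ l
      = real (l+1) * (ta (l+1) + 2 * (PP ^ (l+1)) $ l)"
    using R2[of l "l+1"] by (simp add: ta_def tb_def add.commute)
  then have "real (l + 2) * tb (l+1) = real (l + 2) * (PP ^ (l+1)) $ l"
    by (simp add: algebra_simps)
  then have "tb (l+1) = (PP ^ (l+1)) $ l"
    by (metis mult_left_cancel of_nat_eq_0_iff add_is_0 zero_neq_numeral)
  with r1 show ?thesis unfolding Suc by (simp add: add.commute)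
qed

lemma brec: "real (k + 2) * tb (k + 1) = real (2 * k + 2) * ta k + real (k + 1) * tb k"
proof -
  have r1: "tb (k + 1) = (PP ^ k) $ (k + 2) + tb k + ta k"
    using R1[of k k] by (simp add: ta_def tb_def add.commute)
  have r2: "real (k + 2) * (PP ^ k) $ (k + 2) + real (k + 1) * tb k + real k * ta k
      = real k * (tb k + 2 * ta k)"
    using R2[of k k] by (simp add: ta_def tb_def add.commute)
  show ?thesis using r1 r2 by (simp add: algebra_simps)
qed

definition cT :: "nat \<Rightarrow> real" where "cT m = ta m + tb m"

lemma crec0: "2 * cT 1 = 4 * cT 0"
  using arec[of 0] brec[of 0] ta0 tb0 by (simp add: cT_def)

lemma crec: "real (k + 3) * cT (k + 2) = 2 * real (k + 3) * cT (k + 1) + 3 * real (k + 1) * cT k"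
proof -
  have h1: "ta (k + 1) = ta k + 2 * tb k" by (rule arec)
  have h3: "ta (k + 2) = ta (k + 1) + 2 * tb (k + 1)" using arec[of "k+1"] by (simp add: add.assoc)
  have h2: "real (k + 2) * tb (k + 1) = real (2 * k + 2) * ta k + real (k + 1) * tb k" by (rule brec)
  have h4: "real (k + 3) * tb (k + 2) = real (2 * k + 4) * ta (k + 1) + real (k + 2) * tb (k + 1)"
    using brec[of "k+1"] by (simp add: add.assoc add.commute)
  have "real (k + 3) * cT (k + 2) = real (k + 3) * ta (k + 2) + real (k + 3) * tb (k + 2)"
    by (simp add: cT_def algebra_simps)
  also have "\<dots> = real (k + 3) * (ta (k + 1) + 2 * tb (k + 1)) + real (2 * k + 4) * ta (k + 1) + real (k + 2) * tb (k + 1)"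
    using h3 h4 by simp
  also have "\<dots> = 2 * real (k + 3) * cT (k + 1) + (real (k + 1) * ta (k + 1) + real (k + 2) * tb (k + 1))"
    by (simp add: cT_def algebra_simps)
  also have "real (k + 1) * ta (k + 1) + real (k + 2) * tb (k + 1) = 3 * real (k + 1) * cT k"
    using h1 h2 by (simp add: cT_def algebra_simps)
  finally show ?thesis .
qed

lemma one_plus_X_power_nth: "((1 + fps_X :: real fps) ^ n) $ k = real (n choose k)"
proof -
  have "((1 + fps_X :: real fps) ^ n) = fps_binomial (of_nat n)" by (simp add: fps_binomial_of_nat)
  then show ?thesis by (simp add: binomial_gbinomial)
qed

lemma one_plus_X_power_nth': "((1 + fps_X :: real fps) * (1 + fps_X) ^ n) $ k = real (Suc n choose k)"
  using one_plus_X_power_nth[of "Suc n" k] by simp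

definition Ssum :: "nat \<Rightarrow> real" where
  "Ssum m = (\<Sum>i\<le>m. real (m choose i) * real ((m + 1 - i) choose (i + 1)))"

lemma cT_Ssum: "cT m = Ssum m"
proof -
  have "(1 + fps_X) * PP ^ m = (1 + fps_X) * (fps_X * (1 + fps_X) + 1) ^ m"
    by (simp add: PP_def algebra_simps power2_eq_square)
  also have "\<dots> = (\<Sum>i\<le>m. of_nat (m choose i) * (fps_X ^ i * (1 + fps_X) ^ (i + 1)))"
  proof -
    have b: "(fps_X * (1 + fps_X) + 1) ^ m = (\<Sum>i\<le>m. of_nat (m choose i) * (fps_X * (1 + fps_X :: real fps))^i * 1^(m-i))"
      by (rule binomial_ring)
    show ?thesis unfolding b sum_distrib_left
      by (intro sum.cong refl) (simp add: power_mult_distrib mult_ac)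
  qed
  finally have e: "(1 + fps_X) * PP ^ m = (\<Sum>i\<le>m. fps_const (real (m choose i)) * (fps_X ^ i * (1 + fps_X) ^ (i + 1)))"
    by (simp add: fps_of_nat)
  have "cT m = ((1 + fps_X) * PP ^ m) $ (m + 1)"
    by (simp add: cT_def ta_def tb_def algebra_simps)
  also have "\<dots> = (\<Sum>i\<le>m. real (m choose i) * real ((i + 1) choose (m + 1 - i)))"
    unfolding e fps_sum_nth fps_mult_left_const_nth
    by (intro sum.cong refl) (simp add: fps_X_power_mult_nth one_plus_X_power_nth one_plus_X_power_nth')
  also have "\<dots> = (\<Sum>i\<le>m. real (m choose (m - i)) * real ((m - i + 1) choose (m + 1 - (m - i))))"
    by (rule sum.reindex_bij_witness[where i="\<lambda>i. m - i" and j="\<lambda>i. m - i"]) auto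
  also have "\<dots> = Ssum m"
    unfolding Ssum_def
    by (intro sum.cong refl) (simp add: binomial_symmetric[symmetric] Suc_diff_le)
  finally show ?thesis .
qed



lemma gf_ode:
  shows "gf_A005773 $ 0 = 0"
    and "(1 - 2*fps_X - 3*fps_X^2) * fps_deriv gf_A005773 = 1 + 2*gf_A005773"
proof -
  define X where "X = (fps_X :: real fps)"
  define S where "S = sqrt_series"
  define g where "g = gf_A005773"
  have a0: "(1 - 2 * X - 3 * X ^ 2) $ 0 = (1::real)"
    by (simp add: X_def fps_X_power_nth)
  have S0: "S $ 0 = 1" unfolding S_def sqrt_series_def using a0 by (simp add: X_def)
  have rr: "fps_radical (\<lambda>k x. root k x) (Suc 1) (1 - 2*X - 3*X^2) ^ Suc 1 = 1 - 2*X - 3*X^2"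
    using power_radical[of "1 - 2*X - 3*X^2" "\<lambda>k x. root k x" 1] a0 unfolding a0 by simp
  have S2: "S ^ 2 = 1 - 2 * X - 3 * X ^ 2"
    using rr unfolding S_def sqrt_series_def X_def by (simp add: numeral_2_eq_2)
  have u0: "(6 * X - 2) $ 0 \<noteq> (0::real)" by (simp add: X_def)
  have g_eq: "(6 * X - 2) * g = 1 - 3 * X - S"
  proof -
    have "g = (1 - 3 * X - S) * inverse (6 * X - 2)"
      unfolding g_def gf_A005773_def S_def X_def using u0
      by (simp add: fps_divide_unit X_def)
    then have "(6 * X - 2) * g = (1 - 3 * X - S) * (inverse (6 * X - 2) * (6 * X - 2))"
      by (simp add: ac_simps)
    also have "\<dots> = 1 - 3 * X - S" using inverse_mult_eq_1[OF u0] by simp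
    finally show ?thesis .
  qed
  have g0: "g $ 0 = 0"
  proof -
    have "((6 * X - 2) * g) $ 0 = (1 - 3 * X - S) $ 0" using g_eq by simp
    then show ?thesis using S0 by (simp add: X_def)
  qed
  define R where "R = 1 + 2 * g"
  have Seq: "S = (1 - 3 * X) * R"
    using g_eq unfolding R_def by (simp add: algebra_simps)
  have "(1 - 3 * X) * ((1 - 3 * X) * R ^ 2) = (1 - 3 * X) * (1 + X)"
  proof -
    have "(1 - 3 * X) * ((1 - 3 * X) * R ^ 2) = S ^ 2" unfolding Seq by (simp add: power2_eq_square algebra_simps)
    also have "\<dots> = (1 - 3 * X) * (1 + X)" unfolding S2 by (simp add: power2_eq_square algebra_simps)
    finally show ?thesis .
  qed
  moreover have "(1 - 3 * X) \<noteq> 0"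
  proof -
    have h: "(1 - 3 * X) $ 0 \<noteq> 0" by (simp add: X_def)
    show ?thesis
    proof
      assume "1 - 3 * X = 0"
      then have "(1 - 3 * X) $ 0 = 0" by (simp only: fps_zero_nth)
      with h show False by blast
    qed
  qed
  ultimately have E: "(1 - 3 * X) * R ^ 2 = 1 + X" by simp
  have d1: "fps_deriv ((1 - 3 * X) * R ^ 2) = (1 - 3 * X) * (2 * R * fps_deriv R) - 3 * R ^ 2"
    by (simp add: X_def power2_eq_square algebra_simps)
  have d2: "fps_deriv ((1 - 3 * X) * R ^ 2) = 1" using E by (simp add: X_def)
  have "(1 - 3 * X) * (2 * R * fps_deriv R) - 3 * R ^ 2 = 1"
    using d1 d2 by (simp only:)
  then have Dd: "(1 - 3 * X) * (2 * R * fps_deriv R) = 1 + 3 * R ^ 2"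
    by (simp only: diff_eq_eq)
  have "R * ((1 - 3 * X) * (1 + X) * (2 * fps_deriv R)) = (1 + X) * ((1 - 3 * X) * (2 * R * fps_deriv R))"
    by (simp add: algebra_simps)
  also have "\<dots> = (1 + X) + 3 * ((1 + X) * R ^ 2)" unfolding Dd by (simp add: algebra_simps)
  also have "\<dots> = (1 - 3 * X) * R ^ 2 + 3 * ((1 + X) * R ^ 2)" unfolding E ..
  also have "\<dots> = R * (4 * R)" by (simp add: algebra_simps power2_eq_square)
  finally have "R * ((1 - 3 * X) * (1 + X) * (2 * fps_deriv R)) = R * (4 * R)" .
  moreover have "R \<noteq> 0"
  proof
    assume "R = 0"
    then have "R $ 0 = 0" by (simp only: fps_zero_nth)
    then show False using g0 unfolding R_def by simp
  qed
  ultimately have "(1 - 3 * X) * (1 + X) * (2 * fps_deriv R) = 4 * R" by simp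
  then have "4 * ((1 - 2 * X - 3 * X ^ 2) * fps_deriv g) = 4 * (1 + 2 * g)"
    unfolding R_def by (simp add: algebra_simps power2_eq_square)
  moreover have nz: "(4::real fps) \<noteq> 0"
  proof
    assume "(4::real fps) = 0"
    then have "(4::real fps) $ 0 = 0" by (simp only: fps_zero_nth)
    then show False by simp
  qed
  ultimately have "(1 - 2 * X - 3 * X ^ 2) * fps_deriv g = 1 + 2 * g"
    using mult_left_cancel[OF nz] by blast
  then show "(1 - 2*fps_X - 3*fps_X^2) * fps_deriv gf_A005773 = 1 + 2*gf_A005773"
    unfolding X_def g_def .
  show "gf_A005773 $ 0 = 0" using g0 unfolding g_def .
qed
lemma gf_rec:
  shows "gf_A005773 $ 1 = 1"
    and "real (n + 2) * gf_A005773 $ (n + 2) =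
         2 * real (n + 2) * gf_A005773 $ (n + 1) + 3 * real n * gf_A005773 $ n"
proof -
  define g where "g = gf_A005773"
  define D where "D = fps_deriv g"
  have e: "D - fps_const 2 * (fps_X * D) - fps_const 3 * (fps_X ^ 2 * D) = 1 + fps_const 2 * g"
  proof -
    have "D - fps_const 2 * (fps_X * D) - fps_const 3 * (fps_X ^ 2 * D) = (1 - 2*fps_X - 3*fps_X^2) * D"
      by (simp add: algebra_simps numeral_fps_const)
    also have "\<dots> = 1 + 2 * g" using gf_ode(2) unfolding D_def g_def .
    finally show ?thesis by (simp add: numeral_fps_const)
  qed
  have c: "(D - fps_const 2 * (fps_X * D) - fps_const 3 * (fps_X ^ 2 * D)) $ k = (1 + fps_const 2 * g) $ k" for k
    using e by simp
  from c[of 0] gf_ode(1) show "gf_A005773 $ 1 = 1" unfolding D_def g_def by simp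
  have c2: "D $ (n+1) - 2 * (fps_X * D) $ (n+1) - 3 * (fps_X ^ 2 * D) $ (n+1) = 2 * g $ (n+1)"
    using c[of "n+1"] by (simp only: fps_sub_nth fps_add_nth fps_mult_left_const_nth fps_one_nth) simp
  have c3: "real (n+2) * g $ (n+2) - 2 * (real (n+1) * g $ (n+1)) - 3 * (real n * g $ n) = 2 * g $ (n+1)"
  proof (cases n)
    case 0
    then show ?thesis using c2 unfolding D_def by (simp add: fps_X_power_mult_nth)
  next
    case (Suc k)
    then show ?thesis using c2 unfolding D_def by (simp add: fps_X_power_mult_nth)
  qed
  then show "real (n + 2) * gf_A005773 $ (n + 2) =
         2 * real (n + 2) * gf_A005773 $ (n + 1) + 3 * real n * gf_A005773 $ n"
    unfolding g_def by (simp add: algebra_simps)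
qed


lemma avoids_Nil: "avoids_DUD []"
  by (simp add: avoids_DUD_def)

lemma avoids_Cons: "avoids_DUD (x # w) \<longleftrightarrow> avoids_DUD w \<and> \<not> (x = D \<and> (\<exists>v. w = U # D # v))"
proof
  assume H: "avoids_DUD (x # w)"
  have "avoids_DUD w"
    unfolding avoids_DUD_def
  proof
    assume "\<exists>i. i + 2 < length w \<and> w ! i = D \<and> w ! (i + 1) = U \<and> w ! (i + 2) = D"
    then obtain i where "i + 2 < length w \<and> w ! i = D \<and> w ! (i + 1) = U \<and> w ! (i + 2) = D" by blast
    then have "Suc i + 2 < length (x # w) \<and> (x # w) ! Suc i = D \<and> (x # w) ! (Suc i + 1) = U \<and> (x # w) ! (Suc i + 2) = D"
      by simp
    with H show False unfolding avoids_DUD_def by blast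
  qed
  moreover have "\<not> (x = D \<and> (\<exists>v. w = U # D # v))"
  proof
    assume "x = D \<and> (\<exists>v. w = U # D # v)"
    then obtain v where "x = D" "w = U # D # v" by blast
    then have "0 + 2 < length (x # w) \<and> (x # w) ! 0 = D \<and> (x # w) ! (0 + 1) = U \<and> (x # w) ! (0 + 2) = D"
      by simp
    with H show False unfolding avoids_DUD_def by blast
  qed
  ultimately show "avoids_DUD w \<and> \<not> (x = D \<and> (\<exists>v. w = U # D # v))" by blast
next
  assume H: "avoids_DUD w \<and> \<not> (x = D \<and> (\<exists>v. w = U # D # v))"
  show "avoids_DUD (x # w)"
    unfolding avoids_DUD_def
  proof
    assume "\<exists>i. i + 2 < length (x # w) \<and> (x # w) ! i = D \<and> (x # w) ! (i + 1) = U \<and> (x # w) ! (i + 2) = D"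
    then obtain i where i: "i + 2 < length (x # w)" "(x # w) ! i = D" "(x # w) ! (i + 1) = U" "(x # w) ! (i + 2) = D" by blast
    show False
    proof (cases i)
      case 0
      then have "x = D" "w ! 0 = U" "w ! 1 = D" "2 \<le> length w" using i by auto
      moreover obtain a b r where "w = a # b # r" using \<open>2 \<le> length w\<close>
        by (cases w; cases "tl w") auto
      ultimately have "w = U # D # r" by simp
      with H \<open>x = D\<close> show False by blast
    next
      case (Suc j)
      then have "j + 2 < length w \<and> w ! j = D \<and> w ! (j + 1) = U \<and> w ! (j + 2) = D" using i by auto
      with H show False unfolding avoids_DUD_def by blast
    qed
  qed
qed

definition cnt :: "step \<Rightarrow> step list \<Rightarrow> nat" where
  "cnt s w = length (filter (\<lambda>x. x = s) w)"

definition W :: "nat \<Rightarrow> nat \<Rightarrow> step list set" where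
  "W u d = {w. cnt U w = u \<and> cnt D w = d \<and> avoids_DUD w}"
definition WB :: "nat \<Rightarrow> nat \<Rightarrow> step list set" where
  "WB u d = {w \<in> W u d. \<not> (\<exists>v. w = U # D # v)}"
definition WC :: "nat \<Rightarrow> nat \<Rightarrow> step list set" where
  "WC u d = {w \<in> W u d. \<not> (\<exists>v. w = D # v)}"

lemma cnt_simps [simp]:
  "cnt s [] = 0" "cnt U (U # w) = Suc (cnt U w)" "cnt D (D # w) = Suc (cnt D w)"
  "cnt U (D # w) = cnt U w" "cnt D (U # w) = cnt D w"
  by (simp_all add: cnt_def)

lemma length_cnt: "length w = cnt U w + cnt D w"
proof (induction w)
  case Nil
  then show ?case by simp
next
  case (Cons a w)
  then show ?case by (cases a) simp_all
qed

lemma finite_len: "finite {w :: step list. length w = n}"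
proof -
  have "finite (UNIV :: step set)"
  proof -
    have "(UNIV :: step set) = {U, D}" using step.exhaust by auto
    then show ?thesis by (metis finite.emptyI finite_insert)
  qed
  from finite_lists_length_eq[OF this, of n] show ?thesis by simp
qed

lemma finite_W: "finite (W u d)"
  by (rule finite_subset[OF _ finite_len[of "u + d"]]) (auto simp: W_def length_cnt)

lemma finite_WB: "finite (WB u d)"
  using finite_W by (simp add: WB_def)

lemma card3:
  assumes "E \<subseteq> {[]}" "finite A" "finite B"
  shows "card (E \<union> Cons U ` A \<union> Cons D ` B) = card E + card A + card B"
proof -
  have fE: "finite E" using assms(1) finite_subset by auto
  have "card (E \<union> Cons U ` A \<union> Cons D ` B) = card (E \<union> Cons U ` A) + card (Cons D ` B)"
    by (rule card_Un_disjoint) (use assms fE in auto)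
  also have "card (E \<union> Cons U ` A) = card E + card (Cons U ` A)"
    by (rule card_Un_disjoint) (use assms fE in auto)
  also have "card (Cons U ` A) = card A" by (rule card_image) (simp add: inj_on_def)
  also have "card (Cons D ` B) = card B" by (rule card_image) (simp add: inj_on_def)
  finally show ?thesis .
qed

lemma W_eq: "W u d = (if u = 0 \<and> d = 0 then {[]} else {})
   \<union> Cons U ` (if u > 0 then W (u - 1) d else {})
   \<union> Cons D ` (if d > 0 then WB u (d - 1) else {})"
proof (intro set_eqI iffI)
  fix w assume "w \<in> W u d"
  then show "w \<in> (if u = 0 \<and> d = 0 then {[]} else {})
   \<union> Cons U ` (if u > 0 then W (u - 1) d else {})
   \<union> Cons D ` (if d > 0 then WB u (d - 1) else {})"
  proof (cases w)
    case Nil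
    then show ?thesis using \<open>w \<in> W u d\<close> by (auto simp: W_def)
  next
    case (Cons a v)
    then show ?thesis using \<open>w \<in> W u d\<close>
      by (cases a) (auto simp: W_def WB_def avoids_Cons)
  qed
next
  fix w assume "w \<in> (if u = 0 \<and> d = 0 then {[]} else {})
   \<union> Cons U ` (if u > 0 then W (u - 1) d else {})
   \<union> Cons D ` (if d > 0 then WB u (d - 1) else {})"
  then show "w \<in> W u d"
    by (auto simp: W_def WB_def avoids_Cons avoids_Nil split: if_splits)
qed

lemma WB_eq: "WB u d = (if u = 0 \<and> d = 0 then {[]} else {})
   \<union> Cons U ` (if u > 0 then WC (u - 1) d else {})
   \<union> Cons D ` (if d > 0 then WB u (d - 1) else {})"
proof (intro set_eqI iffI)
  fix w assume "w \<in> WB u d"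
  then show "w \<in> (if u = 0 \<and> d = 0 then {[]} else {})
   \<union> Cons U ` (if u > 0 then WC (u - 1) d else {})
   \<union> Cons D ` (if d > 0 then WB u (d - 1) else {})"
  proof (cases w)
    case Nil
    then show ?thesis using \<open>w \<in> WB u d\<close> by (auto simp: W_def WB_def)
  next
    case (Cons a v)
    then show ?thesis using \<open>w \<in> WB u d\<close>
      by (cases a) (auto simp: W_def WB_def WC_def avoids_Cons)
  qed
next
  fix w assume "w \<in> (if u = 0 \<and> d = 0 then {[]} else {})
   \<union> Cons U ` (if u > 0 then WC (u - 1) d else {})
   \<union> Cons D ` (if d > 0 then WB u (d - 1) else {})"
  then show "w \<in> WB u d"
    by (auto simp: W_def WB_def WC_def avoids_Cons avoids_Nil split: if_splits)
qed

lemma WC_eq: "WC u d = (if u = 0 \<and> d = 0 then {[]} else {})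
   \<union> Cons U ` (if u > 0 then W (u - 1) d else {})
   \<union> Cons D ` {}"
proof (intro set_eqI iffI)
  fix w assume "w \<in> WC u d"
  then show "w \<in> (if u = 0 \<and> d = 0 then {[]} else {})
   \<union> Cons U ` (if u > 0 then W (u - 1) d else {})
   \<union> Cons D ` {}"
  proof (cases w)
    case Nil
    then show ?thesis using \<open>w \<in> WC u d\<close> by (auto simp: W_def WC_def)
  next
    case (Cons a v)
    then show ?thesis using \<open>w \<in> WC u d\<close>
      by (cases a) (auto simp: W_def WC_def avoids_Cons)
  qed
next
  fix w assume "w \<in> (if u = 0 \<and> d = 0 then {[]} else {})
   \<union> Cons U ` (if u > 0 then W (u - 1) d else {})
   \<union> Cons D ` {}"
  then show "w \<in> WC u d"
    by (auto simp: W_def WC_def avoids_Cons avoids_Nil split: if_splits)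
qed

lemma finite_WC: "finite (WC u d)"
  using finite_W by (simp add: WC_def)

lemma card_W: "card (W u d) = (if u = 0 \<and> d = 0 then 1 else 0)
   + (if u > 0 then card (W (u - 1) d) else 0) + (if d > 0 then card (WB u (d - 1)) else 0)"
proof -
  have "card (W u d) = card (if u = 0 \<and> d = 0 then {[] :: step list} else {}) + card (if u > 0 then W (u - 1) d else {})
     + card (if d > 0 then WB u (d - 1) else {})"
  proof -
    have "card (W u d) = card ((if u = 0 \<and> d = 0 then {[]} else {})
   \<union> Cons U ` (if u > 0 then W (u - 1) d else {})
   \<union> Cons D ` (if d > 0 then WB u (d - 1) else {}))" using W_eq[of u d] by simp
    also have "\<dots> = card (if u = 0 \<and> d = 0 then {[] :: step list} else {}) + card (if u > 0 then W (u - 1) d else {})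
     + card (if d > 0 then WB u (d - 1) else {})"
      by (rule card3) (auto simp: finite_W finite_WB)
    finally show ?thesis .
  qed
  then show ?thesis by simp
qed

lemma card_WB: "card (WB u d) = (if u = 0 \<and> d = 0 then 1 else 0)
   + (if u > 0 then card (WC (u - 1) d) else 0) + (if d > 0 then card (WB u (d - 1)) else 0)"
proof -
  have "card (WB u d) = card (if u = 0 \<and> d = 0 then {[] :: step list} else {}) + card (if u > 0 then WC (u - 1) d else {})
     + card (if d > 0 then WB u (d - 1) else {})"
    by (subst WB_eq[of u d], rule card3) (auto simp: finite_WC finite_WB)
  then show ?thesis by simp
qed

lemma card_WC: "card (WC u d) = (if u = 0 \<and> d = 0 then 1 else 0)
   + (if u > 0 then card (W (u - 1) d) else 0)"
proof -
  have "card (WC u d) = card (if u = 0 \<and> d = 0 then {[] :: step list} else {}) + card (if u > 0 then W (u - 1) d else {})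
     + card ({} :: step list set)"
    by (subst WC_eq[of u d], rule card3) (auto simp: finite_W)
  then show ?thesis by simp
qed

definition Af :: "nat \<Rightarrow> real fps" where "Af d = Abs_fps (\<lambda>u. real (card (W u d)))"
definition Bf :: "nat \<Rightarrow> real fps" where "Bf d = Abs_fps (\<lambda>u. real (card (WB u d)))"
definition Cf :: "nat \<Rightarrow> real fps" where "Cf d = Abs_fps (\<lambda>u. real (card (WC u d)))"

lemma Af0: "Af 0 = 1 + fps_X * Af 0"
  by (rule fps_ext, subst (1) Af_def) (auto simp: Af_def card_W[of _ 0])
lemma AfS: "Af (Suc k) = fps_X * Af (Suc k) + Bf k"
  by (rule fps_ext, subst (1) Af_def) (auto simp: Af_def Bf_def card_W[of _ "Suc k"])
lemma Bf0: "Bf 0 = 1 + fps_X * Cf 0"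
  by (rule fps_ext, subst (1) Bf_def) (auto simp: Bf_def Cf_def card_WB[of _ 0])
lemma BfS: "Bf (Suc k) = fps_X * Cf (Suc k) + Bf k"
  by (rule fps_ext, subst (1) Bf_def) (auto simp: Bf_def Cf_def card_WB[of _ "Suc k"])
lemma Cf0: "Cf 0 = 1 + fps_X * Af 0"
  by (rule fps_ext, subst (1) Cf_def) (auto simp: Af_def Cf_def card_WC[of _ 0])
lemma CfS: "Cf (Suc k) = fps_X * Af (Suc k)"
  by (rule fps_ext, subst (1) Cf_def) (auto simp: Af_def Cf_def card_WC[of _ "Suc k"])


definition NN :: "real fps" where "NN = 1 - fps_X + fps_X ^ 2"

lemma A0': "(1 - fps_X) * Af 0 = 1"
proof -
  have "(1 - fps_X) * Af 0 = Af 0 - fps_X * Af 0" by (simp add: algebra_simps)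
  also have "\<dots> = 1" using Af0 by (simp add: algebra_simps)
  finally show ?thesis .
qed

lemma B0': "Bf 0 = Af 0"
proof -
  have "Cf 0 = Af 0" using Cf0 Af0 by simp
  then show ?thesis using Bf0 Af0 Cf0 by simp
qed

lemma AS': "(1 - fps_X) * Af (Suc k) = Bf k"
proof -
  have "(1 - fps_X) * Af (Suc k) = Af (Suc k) - fps_X * Af (Suc k)" by (simp add: algebra_simps)
  also have "\<dots> = Bf k" using AfS[of k] by (simp add: algebra_simps)
  finally show ?thesis .
qed

lemma BS': "Bf (Suc k) = NN * Af (Suc k)"
proof -
  have "Bf (Suc k) = fps_X * (fps_X * Af (Suc k)) + (1 - fps_X) * Af (Suc k)"
    using BfS[of k] CfS[of k] AS'[of k] by simp
  also have "\<dots> = NN * Af (Suc k)" by (simp add: NN_def algebra_simps power2_eq_square)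
  finally show ?thesis .
qed

lemma Aclosed: "(1 - fps_X) ^ (m + 2) * Af (m + 1) = NN ^ m"
proof (induction m)
  case 0
  have "(1 - fps_X) ^ 2 * Af 1 = (1 - fps_X) * ((1 - fps_X) * Af (Suc 0))"
    by (simp add: power2_eq_square algebra_simps)
  also have "\<dots> = 1" using AS'[of 0] B0' A0' by simp
  finally show ?case by (simp add: power2_eq_square)
next
  case (Suc m)
  have "(1 - fps_X) ^ (Suc m + 2) * Af (Suc m + 1) = (1 - fps_X) ^ (m + 2) * ((1 - fps_X) * Af (Suc (Suc m)))"
    by (simp add: algebra_simps)
  also have "\<dots> = (1 - fps_X) ^ (m + 2) * (NN * Af (Suc m))" using AS'[of "Suc m"] BS'[of m] by simp
  also have "\<dots> = NN * ((1 - fps_X) ^ (m + 2) * Af (m + 1))" by (simp add: algebra_simps)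
  also have "\<dots> = NN ^ Suc m" using Suc.IH by simp
  finally show ?case .
qed


definition Yinv :: "real fps" where "Yinv = inverse (1 - fps_X)"

lemma Yinv_mult: "Yinv * (1 - fps_X) = 1"
  unfolding Yinv_def by (rule inverse_mult_eq_1) simp

lemma Yinv_nth: "Yinv $ k = 1"
  unfolding Yinv_def fps_inverse_one_minus_fps_X by simp

lemma Yinv_power_nth: "(Yinv ^ Suc r) $ k = real ((r + k) choose k)"
proof (induction r arbitrary: k)
  case 0
  then show ?case by (simp add: Yinv_nth)
next
  case (Suc r)
  have "(Yinv ^ Suc (Suc r)) $ k = (Yinv * Yinv ^ Suc r) $ k" by simp
  also have "\<dots> = (\<Sum>i=0..k. Yinv $ i * (Yinv ^ Suc r) $ (k - i))" by (rule fps_mult_nth)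
  also have "\<dots> = (\<Sum>i=0..k. real ((r + (k - i)) choose (k - i)))" by (simp add: Yinv_nth Suc.IH del: power_Suc)
  also have "\<dots> = (\<Sum>j=0..k. real ((r + j) choose j))"
    by (rule sum.reindex_bij_witness[where i="\<lambda>i. k - i" and j="\<lambda>i. k - i"]) auto
  also have "\<dots> = real (\<Sum>j\<le>k. (r + j) choose j)" by (simp add: atMost_atLeast0)
  also have "\<dots> = real ((Suc r + k) choose k)" by (simp add: sum_choose_lower)
  finally show ?case .
qed

lemma Af_closed: "Af (m + 1) = (\<Sum>i\<le>m. fps_const (real (m choose i)) * (fps_X ^ (2 * i) * Yinv ^ (i + 2)))"
proof -
  have "Af (m + 1) = (Yinv * (1 - fps_X)) ^ (m + 2) * Af (m + 1)" by (simp add: Yinv_mult)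
  also have "\<dots> = Yinv ^ (m + 2) * ((1 - fps_X) ^ (m + 2) * Af (m + 1))"
    by (simp only: power_mult_distrib mult.assoc)
  also have "\<dots> = Yinv ^ (m + 2) * NN ^ m" by (simp only: Aclosed)
  also have "\<dots> = (NN * Yinv) ^ m * Yinv ^ 2" by (simp add: power_mult_distrib power_add mult_ac power2_eq_square)
  also have "NN * Yinv = fps_X ^ 2 * Yinv + 1"
  proof -
    have "NN * Yinv = Yinv * (1 - fps_X) + fps_X ^ 2 * Yinv" by (simp add: NN_def algebra_simps)
    then show ?thesis by (simp add: Yinv_mult)
  qed
  also have "(fps_X ^ 2 * Yinv + 1) ^ m = (\<Sum>i\<le>m. of_nat (m choose i) * (fps_X ^ 2 * Yinv) ^ i * 1 ^ (m - i))"
    by (rule binomial_ring)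
  also have "(\<Sum>i\<le>m. of_nat (m choose i) * (fps_X ^ 2 * Yinv) ^ i * 1 ^ (m - i)) * Yinv ^ 2
      = (\<Sum>i\<le>m. fps_const (real (m choose i)) * (fps_X ^ (2 * i) * Yinv ^ (i + 2)))"
    unfolding sum_distrib_right
  proof (intro sum.cong refl)
    fix i
    have e1: "(fps_X ^ 2 * Yinv) ^ i = fps_X ^ (2 * i) * Yinv ^ i"
      by (simp only: power_mult_distrib power_mult)
    have e2: "Yinv ^ (i + 2) = Yinv ^ i * Yinv ^ 2" by (rule power_add)
    show "of_nat (m choose i) * (fps_X ^ 2 * Yinv) ^ i * 1 ^ (m - i) * Yinv ^ 2 =
         fps_const (real (m choose i)) * (fps_X ^ (2 * i) * Yinv ^ (i + 2))"
      unfolding e1 e2 by (simp add: fps_of_nat mult_ac)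
  qed
  finally show ?thesis .
qed

lemma card_W_diag: "real (card (W m (m + 1))) = Ssum m"
proof -
  have "real (card (W m (m + 1))) = Af (m + 1) $ m" by (simp add: Af_def)
  also have "\<dots> = (\<Sum>i\<le>m. real (m choose i) * (fps_X ^ (2 * i) * Yinv ^ Suc (Suc i)) $ m)"
    unfolding Af_closed fps_sum_nth fps_mult_left_const_nth by simp
  also have "\<dots> = Ssum m"
    unfolding Ssum_def
  proof (intro sum.cong refl)
    fix i assume "i \<in> {..m}"
    show "real (m choose i) * (fps_X ^ (2 * i) * Yinv ^ Suc (Suc i)) $ m
        = real (m choose i) * real ((m + 1 - i) choose (i + 1))"
    proof (cases "m < 2 * i")
      case True
      then have "(m + 1 - i) choose (i + 1) = 0" by (intro binomial_eq_0) auto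
      then show ?thesis using True by (simp add: fps_X_power_mult_nth)
    next
      case False
      have "(fps_X ^ (2 * i) * Yinv ^ Suc (Suc i)) $ m = (Yinv ^ Suc (Suc i)) $ (m - 2 * i)"
        using False by (simp add: fps_X_power_mult_nth del: power_Suc)
      also have "\<dots> = real ((Suc i + (m - 2 * i)) choose (m - 2 * i))"
        by (rule Yinv_power_nth)
      also have "Suc i + (m - 2 * i) = m + 1 - i" using False by simp
      also have "(m + 1 - i) choose (m - 2 * i) = (m + 1 - i) choose (i + 1)"
      proof -
        have "(m + 1 - i) choose (i + 1) = (m + 1 - i) choose ((m + 1 - i) - (i + 1))"
          by (rule binomial_symmetric) (use False in simp)
        also have "(m + 1 - i) - (i + 1) = m - 2 * i" using False by simp
        finally show ?thesis by simp
      qed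
      finally show ?thesis by simp
    qed
  qed
  finally show ?thesis .
qed


lemma gd_eq:
  assumes "n \<ge> 1"
  shows "grand_dyck_U_DUD n = Cons U ` W (n - 1) n"
proof (intro set_eqI iffI)
  fix w assume "w \<in> grand_dyck_U_DUD n"
  then have h: "cnt U w = n" "cnt D w = n" "w \<noteq> []" "hd w = U" "avoids_DUD w"
    unfolding grand_dyck_U_DUD_def cnt_def by auto
  then obtain v where v: "w = U # v" by (cases w) auto
  then have "v \<in> W (n - 1) n" using h by (auto simp: W_def avoids_Cons)
  then show "w \<in> Cons U ` W (n - 1) n" using v by blast
next
  fix w assume "w \<in> Cons U ` W (n - 1) n"
  then obtain v where v: "w = U # v" "v \<in> W (n - 1) n" by blast
  then show "w \<in> grand_dyck_U_DUD n"
    using assms unfolding grand_dyck_U_DUD_def W_def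
    by (auto simp: avoids_Cons cnt_def)
qed

lemma cT_gf: "cT n = gf_A005773 $ (n + 1) \<and> cT (n + 1) = gf_A005773 $ (n + 2)"
proof (induction n)
  case 0
  have c0: "cT 0 = 1" by (simp add: cT_def ta0 tb0)
  have g2: "gf_A005773 $ 2 = 2" using gf_rec(2)[of 0] gf_rec(1) by (simp add: numeral_2_eq_2)
  show ?case using c0 crec0 gf_rec(1) g2 by (simp add: numeral_2_eq_2)
next
  case (Suc n)
  have a: "real (n + 3) * cT (n + 2) = 2 * real (n + 3) * cT (n + 1) + 3 * real (n + 1) * cT n"
    by (rule crec)
  have b: "real (n + 3) * gf_A005773 $ (n + 3) =
      2 * real (n + 3) * gf_A005773 $ (n + 2) + 3 * real (n + 1) * gf_A005773 $ (n + 1)"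
  proof -
    have e1: "n + 1 + 2 = n + 3" by simp
    have e2: "n + 1 + 1 = n + 2" by simp
    show ?thesis using gf_rec(2)[of "n + 1"] unfolding e1 e2 .
  qed
  have "real (n + 3) * cT (n + 2) = real (n + 3) * gf_A005773 $ (n + 3)"
    using a b Suc.IH by simp
  then have "cT (n + 2) = gf_A005773 $ (n + 3)" by simp
  moreover have "n + 3 = Suc n + 2" by simp
  ultimately show ?case using Suc.IH by (simp add: add.assoc)
qed

theorem corollary1:
  fixes n :: nat
  assumes "n \<ge> 1"
  shows "real (card (grand_dyck_U_DUD n)) = fps_nth gf_A005773 n"
proof -
  obtain m where m: "n = m + 1" using assms by (metis add.commute le_Suc_ex)
  have ge: "grand_dyck_U_DUD n = Cons U ` W m (m + 1)" using gd_eq[OF assms] m by simp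
  have "card (grand_dyck_U_DUD n) = card (W m (m + 1))"
    unfolding ge by (rule card_image) (simp add: inj_on_def)
  then have "real (card (grand_dyck_U_DUD n)) = Ssum m" using card_W_diag by simp
  also have "\<dots> = cT m" by (simp add: cT_Ssum)
  also have "\<dots> = gf_A005773 $ n" using cT_gf[of m] m by simp
  finally show ?thesis .
qed

end
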